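(* Consider federated averaging with $K$ clients over the objective $F(w)=\frac1K\sum_{k=1}^K f_k(w)$, $w\in\mathbb{R}^d$, with $Q\ge1$ local steps of stepsize $\beta>0$ and server update $w^{t+1}=w^t+\bar\Delta^t+\varepsilon^t$ (notation in the context). Assume: (A1) each $f_k$ is $L$-smooth (hence $F$ is $L$-smooth) and $F(w)\ge F_\star$ for all $w$; (A2) $\mathbb{E}[g_{k,q}^t\mid w_{k,q}^t]=\nabla f_k(w_{k,q}^t)$ for all $k,q,t$; (A3) $\|g_{k,q}^t\|\le G$ almost surely for all $k,q,t$; (A4) $\mathbb{E}[\|g_{k,q}^t-\nabla f_k(w_{k,q}^t)\|^2\mid w_{k,q}^t]\le\sigma_g^2$, and the gradient noises $g_{k,q}^t-\nabla f_k(w_{k,q}^t)$ of different clients are conditionally uncorrelated given the local iterates; (A5) the aggregation error satisfies $\mathbb{E}[\varepsilon^t\mid\mathcal{F}_t,\{\Delta_k^t\}_{k=1}^K]=0$ (hence $\mathbb{E}[\varepsilon^t\mid\mathcal{F}_t]=0$) and $\mathbb{E}\|\varepsilon^t\|^2\le\sigma_{\mathrm{air}}^2$ for all $t$. If $\beta\le\frac{1}{8LQ}$, then for every $T\ge1$, $$\frac1T\sum_{t=0}^{T-1}\mathbb{E}\|\nabla F(w^t)\|^2\le\frac{4(F(w^0)-F_\star)}{\beta QT}+2L^2\beta^2Q^2G^2+8L^3\beta^3Q^3G^2+\frac{4L\beta Q}{K}\sigma_g^2+\frac{2L}{\beta Q}\sigma_{\mathrm{air}}^2.$$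
   Context: Federated averaging (FedAvg) setup: client $k$ has a local objective $f_k:\mathbb{R}^d\to\mathbb{R}$. At round $t=0,1,\dots$ the server holds $w^t$; each client sets $w_{k,0}^t=w^t$ and runs $w_{k,q+1}^t=w_{k,q}^t-\beta g_{k,q}^t$ for $q=0,\dots,Q-1$, where $g_{k,q}^t$ are stochastic gradients. The local increment is $\Delta_k^t=w_{k,Q}^t-w^t=-\beta\sum_{q=0}^{Q-1}g_{k,q}^t$ and the ideal aggregate is $\bar\Delta^t=\frac1K\sum_{k=1}^K\Delta_k^t$ (all $K$ clients participate). The server applies $w^{t+1}=w^t+\bar\Delta^t+\varepsilon^t$, where $\varepsilon^t\in\mathbb{R}^d$ is the (over-the-air) aggregation error, and $\sigma_{\mathrm{air}}^2\ge0$ is a constant. $\mathcal{F}_t$ denotes the sigma-field generated by the global model and all randomness up to the beginning of round $t$. *)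

theory Defs
  imports "HOL-Probability.Probability"
begin

primrec fl_local :: "real \<Rightarrow> (nat \<Rightarrow> 'a::real_vector) \<Rightarrow> 'a \<Rightarrow> nat \<Rightarrow> 'a" where
  "fl_local beta h x 0 = x"
| "fl_local beta h x (Suc q) = fl_local beta h x q - beta *\<^sub>R h q"

text \<open>Global FedAvg iterate w^t (as a function of the sample point), with
  g k q t = g_{k,q}^t, clients k in {..<K}, eps t = aggregation error of round t.\<close>
primrec fl_global :: "real \<Rightarrow> nat \<Rightarrow> nat \<Rightarrow> 'a::real_vector
    \<Rightarrow> (nat \<Rightarrow> nat \<Rightarrow> nat \<Rightarrow> 'b \<Rightarrow> 'a) \<Rightarrow> (nat \<Rightarrow> 'b \<Rightarrow> 'a) \<Rightarrow> nat \<Rightarrow> 'b \<Rightarrow> 'a" where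
  "fl_global beta K Q w0 g eps 0 \<omega> = w0"
| "fl_global beta K Q w0 g eps (Suc t) \<omega> =
     (let x = fl_global beta K Q w0 g eps t \<omega> in
        x + (1 / real K) *\<^sub>R (\<Sum>k<K. fl_local beta (\<lambda>q. g k q t \<omega>) x Q - x) + eps t \<omega>)"

definition fl_witer :: "real \<Rightarrow> nat \<Rightarrow> nat \<Rightarrow> 'a::real_vector
    \<Rightarrow> (nat \<Rightarrow> nat \<Rightarrow> nat \<Rightarrow> 'b \<Rightarrow> 'a) \<Rightarrow> (nat \<Rightarrow> 'b \<Rightarrow> 'a) \<Rightarrow> nat \<Rightarrow> nat \<Rightarrow> nat \<Rightarrow> 'b \<Rightarrow> 'a" where
  "fl_witer beta K Q w0 g eps t k q \<omega> =
     fl_local beta (\<lambda>q. g k q t \<omega>) (fl_global beta K Q w0 g eps t \<omega>) q"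

definition gen_sigma :: "'b measure \<Rightarrow> 'b set set \<Rightarrow> ('i \<Rightarrow> 'b \<Rightarrow> 'a::topological_space) \<Rightarrow> 'i set \<Rightarrow> 'b measure" where
  "gen_sigma M S X I =
     sigma (space M) (S \<union> (\<Union>i\<in>I. {X i -` B \<inter> space M | B. B \<in> sets borel}))"

definition is_cond_exp :: "'b measure \<Rightarrow> 'b measure \<Rightarrow> ('b \<Rightarrow> 'a::{banach,second_countable_topology}) \<Rightarrow> ('b \<Rightarrow> 'a) \<Rightarrow> bool" where
  "is_cond_exp M N X Y \<longleftrightarrow>
     subalgebra M N \<and> integrable M X \<and> Y \<in> borel_measurable N \<and> integrable M Y \<and>
     (\<forall>A\<in>sets N. (\<integral>\<omega>. indicator A \<omega> *\<^sub>R X \<omega> \<partial>M) = (\<integral>\<omega>. indicator A \<omega> *\<^sub>R Y \<omega> \<partial>M))"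

end

theory Submission
  imports Defs
begin

lemma ce_component:
  fixes X Y :: "'b \<Rightarrow> 'a::euclidean_space"
  assumes P: "prob_space M" and CE: "is_cond_exp M N X Y"
  shows "AE \<omega> in M. real_cond_exp M N (\<lambda>\<omega>. X \<omega> \<bullet> b) \<omega> = Y \<omega> \<bullet> b"
proof -
  interpret prob_space M by (rule P)
  have sub: "subalgebra M N" and iX: "integrable M X" and mY: "Y \<in> borel_measurable N"
    and iY: "integrable M Y"
    and eq: "\<And>A. A \<in> sets N \<Longrightarrow> (\<integral>\<omega>. indicator A \<omega> *\<^sub>R X \<omega> \<partial>M) = (\<integral>\<omega>. indicator A \<omega> *\<^sub>R Y \<omega> \<partial>M)"
    using CE unfolding is_cond_exp_def by auto
  interpret finite_measure_subalgebra M N by unfold_locales (rule sub)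
  show ?thesis
  proof (rule real_cond_exp_charact)
    fix A assume A: "A \<in> sets N"
    then have AM: "A \<in> sets M" using sub by (meson subalgebra_def subsetD)
    have "(\<integral>\<omega>\<in>A. X \<omega> \<bullet> b \<partial>M) = (\<integral>\<omega>. (indicator A \<omega> *\<^sub>R X \<omega>) \<bullet> b \<partial>M)"
      unfolding set_lebesgue_integral_def by simp
    also have "\<dots> = (\<integral>\<omega>. indicator A \<omega> *\<^sub>R X \<omega> \<partial>M) \<bullet> b"
      by (rule integral_inner_left) (rule integrable_mult_indicator[OF AM iX])
    also have "\<dots> = (\<integral>\<omega>. indicator A \<omega> *\<^sub>R Y \<omega> \<partial>M) \<bullet> b" using eq[OF A] by simp
    also have "\<dots> = (\<integral>\<omega>. (indicator A \<omega> *\<^sub>R Y \<omega>) \<bullet> b \<partial>M)"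
      by (rule integral_inner_left[symmetric]) (rule integrable_mult_indicator[OF AM iY])
    also have "\<dots> = (\<integral>\<omega>\<in>A. Y \<omega> \<bullet> b \<partial>M)"
      unfolding set_lebesgue_integral_def by simp
    finally show "(\<integral>\<omega>\<in>A. X \<omega> \<bullet> b \<partial>M) = (\<integral>\<omega>\<in>A. Y \<omega> \<bullet> b \<partial>M)" .
  next
    show "integrable M (\<lambda>\<omega>. X \<omega> \<bullet> b)" using iX by simp
    show "integrable M (\<lambda>\<omega>. Y \<omega> \<bullet> b)" using iY by simp
    show "(\<lambda>\<omega>. Y \<omega> \<bullet> b) \<in> borel_measurable N" using mY by measurable
  qed
qed

lemma ce_bounded:
  fixes X Y :: "'b \<Rightarrow> 'a::euclidean_space"
  assumes P: "prob_space M" and CE: "is_cond_exp M N X Y"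
    and B: "AE \<omega> in M. norm (X \<omega>) \<le> G"
  shows "AE \<omega> in M. norm (Y \<omega>) \<le> real DIM('a) * G"
proof -
  interpret prob_space M by (rule P)
  have sub: "subalgebra M N" and iX: "integrable M X"
    using CE unfolding is_cond_exp_def by auto
  interpret finite_measure_subalgebra M N by unfold_locales (rule sub)
  have "AE \<omega> in M. \<bar>Y \<omega> \<bullet> b\<bar> \<le> G" if "b \<in> Basis" for b
  proof -
    have iXb: "integrable M (\<lambda>\<omega>. X \<omega> \<bullet> b)" using iX by simp
    have Xb: "AE \<omega> in M. \<bar>X \<omega> \<bullet> b\<bar> \<le> G"
      using B by eventually_elim (metis Basis_le_norm order.trans that)
    have 1: "AE \<omega> in M. real_cond_exp M N (\<lambda>\<omega>. X \<omega> \<bullet> b) \<omega> \<le> G"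
      by (rule real_cond_exp_le_c[OF iXb]) (use Xb in \<open>eventually_elim, auto\<close>)
    have 2: "AE \<omega> in M. real_cond_exp M N (\<lambda>\<omega>. X \<omega> \<bullet> b) \<omega> \<ge> - G"
      by (rule real_cond_exp_ge_c[OF iXb]) (use Xb in \<open>eventually_elim, auto\<close>)
    show ?thesis using 1 2 ce_component[OF P CE, of b] by eventually_elim auto
  qed
  then have "AE \<omega> in M. \<forall>b\<in>Basis. \<bar>Y \<omega> \<bullet> b\<bar> \<le> G"
    by (intro AE_ball_countable') (auto intro: countable_finite)
  then show ?thesis
  proof eventually_elim
    case (elim \<omega>)
    have "norm (Y \<omega>) \<le> (\<Sum>b\<in>Basis. \<bar>Y \<omega> \<bullet> b\<bar>)" by (rule norm_le_l1)
    also have "\<dots> \<le> (\<Sum>b\<in>(Basis::'a set). G)" using elim by (intro sum_mono) auto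
    also have "\<dots> = real DIM('a) * G" by simp
    finally show ?case .
  qed
qed

lemma ce_inner:
  fixes X Y h :: "'b \<Rightarrow> 'a::euclidean_space"
  assumes P: "prob_space M" and CE: "is_cond_exp M N X Y"
    and hN: "h \<in> borel_measurable N" and hB: "AE \<omega> in M. norm (h \<omega>) \<le> C"
  shows "(\<integral>\<omega>. h \<omega> \<bullet> X \<omega> \<partial>M) = (\<integral>\<omega>. h \<omega> \<bullet> Y \<omega> \<partial>M)"
proof -
  interpret prob_space M by (rule P)
  have sub: "subalgebra M N" and iX: "integrable M X" and iY: "integrable M Y"
    using CE unfolding is_cond_exp_def by auto
  interpret finite_measure_subalgebra M N by unfold_locales (rule sub)
  have hM: "h \<in> borel_measurable M" by (rule measurable_from_subalg[OF sub hN])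
  have intb: "integrable M (\<lambda>\<omega>. (h \<omega> \<bullet> b) * (Z \<omega> \<bullet> b))" if "integrable M Z" "b \<in> Basis" for Z :: "'b \<Rightarrow> 'a" and b
  proof -
    have iC: "integrable M (\<lambda>\<omega>. C * norm (Z \<omega>))" using that by auto
    show ?thesis
    proof (rule Bochner_Integration.integrable_bound[OF iC])
    show "(\<lambda>\<omega>. (h \<omega> \<bullet> b) * (Z \<omega> \<bullet> b)) \<in> borel_measurable M"
      using hM borel_measurable_integrable[OF that(1)] by measurable
    show "AE \<omega> in M. norm ((h \<omega> \<bullet> b) * (Z \<omega> \<bullet> b)) \<le> norm (C * norm (Z \<omega>))"
      using hB
    proof eventually_elim
      case (elim \<omega>)
      have "norm ((h \<omega> \<bullet> b) * (Z \<omega> \<bullet> b)) \<le> norm (h \<omega>) * norm (Z \<omega>)"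
        unfolding real_norm_def abs_mult by (intro mult_mono) (auto simp: Basis_le_norm that(2))
      also have "\<dots> \<le> norm (C * norm (Z \<omega>))"
        using elim by (simp add: mult_right_mono abs_mult)
      finally show ?case .
    qed
  qed
  qed
  have e: "h \<omega> \<bullet> Z \<omega> = (\<Sum>b\<in>Basis. (h \<omega> \<bullet> b) * (Z \<omega> \<bullet> b))" for Z :: "'b \<Rightarrow> 'a" and \<omega>
    by (rule euclidean_inner)
  have "(\<integral>\<omega>. h \<omega> \<bullet> X \<omega> \<partial>M) = (\<Sum>b\<in>Basis. \<integral>\<omega>. (h \<omega> \<bullet> b) * (X \<omega> \<bullet> b) \<partial>M)"
    unfolding e[of _ X] by (subst Bochner_Integration.integral_sum) (use intb[OF iX] in auto)
  also have "\<dots> = (\<Sum>b\<in>Basis. \<integral>\<omega>. (h \<omega> \<bullet> b) * (Y \<omega> \<bullet> b) \<partial>M)"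
  proof (rule sum.cong[OF refl])
    fix b :: 'a assume bB: "b \<in> Basis"
    have "(\<integral>\<omega>. (h \<omega> \<bullet> b) * (X \<omega> \<bullet> b) \<partial>M) = (\<integral>\<omega>. (h \<omega> \<bullet> b) * real_cond_exp M N (\<lambda>\<omega>. X \<omega> \<bullet> b) \<omega> \<partial>M)"
      by (rule real_cond_exp_intg(2)[symmetric]) (use intb[OF iX bB] hN borel_measurable_integrable[OF iX] in \<open>auto\<close>)
    also have "\<dots> = (\<integral>\<omega>. (h \<omega> \<bullet> b) * (Y \<omega> \<bullet> b) \<partial>M)"
      by (rule integral_cong_AE) (use ce_component[OF P CE, of b] hM borel_measurable_integrable[OF iX] borel_measurable_integrable[OF iY] in \<open>auto\<close>)
    finally show "(\<integral>\<omega>. (h \<omega> \<bullet> b) * (X \<omega> \<bullet> b) \<partial>M) = (\<integral>\<omega>. (h \<omega> \<bullet> b) * (Y \<omega> \<bullet> b) \<partial>M)" .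
  qed
  also have "\<dots> = (\<integral>\<omega>. h \<omega> \<bullet> Y \<omega> \<partial>M)"
    unfolding e[of _ Y] by (subst Bochner_Integration.integral_sum) (use intb[OF iY] in auto)
  finally show ?thesis .
qed

lemma descent:
  fixes f :: "'a::euclidean_space \<Rightarrow> real"
  assumes D: "\<And>x. (f has_derivative (\<lambda>h. gf x \<bullet> h)) (at x)"
    and Lip: "\<And>x y. norm (gf x - gf y) \<le> L * norm (x - y)"
  shows "f y \<le> f x + gf x \<bullet> (y - x) + L / 2 * (norm (y - x))\<^sup>2"
proof -
  define d where "d = y - x"
  define \<psi> where "\<psi> s = f (x + s *\<^sub>R d) - s * (gf x \<bullet> d) - L / 2 * s\<^sup>2 * (norm d)\<^sup>2" for s :: real
  define \<psi>' where "\<psi>' s = gf (x + s *\<^sub>R d) \<bullet> d - gf x \<bullet> d - L * s * (norm d)\<^sup>2" for s :: real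
  have der: "(\<psi> has_real_derivative \<psi>' s) (at s)" for s
  proof -
    have "((\<lambda>s. x + s *\<^sub>R d) has_derivative (\<lambda>h. h *\<^sub>R d)) (at s)"
      by (auto intro!: derivative_eq_intros)
    from has_derivative_compose[OF this D]
    have "((\<lambda>s. f (x + s *\<^sub>R d)) has_derivative (\<lambda>h. gf (x + s *\<^sub>R d) \<bullet> (h *\<^sub>R d))) (at s)" .
    then have "((\<lambda>s. f (x + s *\<^sub>R d)) has_real_derivative gf (x + s *\<^sub>R d) \<bullet> d) (at s)"
      by (simp add: has_field_derivative_def mult.commute[of _ "gf (x + s *\<^sub>R d) \<bullet> d"])
    then show ?thesis unfolding \<psi>_def \<psi>'_def
      by (auto intro!: derivative_eq_intros simp: power2_eq_square)
  qed
  obtain z where z: "0 < z" "z < 1" "\<psi> 1 - \<psi> 0 = (1 - 0) * \<psi>' z"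
    using MVT2[of 0 1 \<psi> \<psi>'] der by auto
  have "gf (x + z *\<^sub>R d) \<bullet> d - gf x \<bullet> d = (gf (x + z *\<^sub>R d) - gf x) \<bullet> d"
    by (simp add: inner_diff_left)
  also have "\<dots> \<le> norm (gf (x + z *\<^sub>R d) - gf x) * norm d" by (rule norm_cauchy_schwarz)
  also have "\<dots> \<le> L * norm (z *\<^sub>R d) * norm d"
    using Lip[of "x + z *\<^sub>R d" x] by (intro mult_right_mono) auto
  also have "\<dots> = L * z * (norm d)\<^sup>2" using z by (simp add: power2_eq_square)
  finally have "\<psi>' z \<le> 0" unfolding \<psi>'_def by simp
  then have "\<psi> 1 \<le> \<psi> 0" using z by simp
  then show ?thesis unfolding \<psi>_def d_def by simp
qed

lemma gen_sigma_facts: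
  assumes S: "S \<subseteq> sets M"
  shows "space (gen_sigma M S X I) = space M"
    and "S \<subseteq> sets (gen_sigma M S X I)"
    and "i \<in> I \<Longrightarrow> X i \<in> borel_measurable (gen_sigma M S X I)"
proof -
  have P: "S \<union> (\<Union>i\<in>I. {X i -` B \<inter> space M | B. B \<in> sets borel}) \<subseteq> Pow (space M)"
    using S sets.sets_into_space by auto
  show sp: "space (gen_sigma M S X I) = space M"
    unfolding gen_sigma_def using P by (simp add: space_measure_of_conv)
  have st: "sets (gen_sigma M S X I) = sigma_sets (space M) (S \<union> (\<Union>i\<in>I. {X i -` B \<inter> space M | B. B \<in> sets borel}))"
    unfolding gen_sigma_def using P by (simp add: sets_measure_of)
  show "S \<subseteq> sets (gen_sigma M S X I)" unfolding st by auto
  assume i: "i \<in> I"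
  show "X i \<in> borel_measurable (gen_sigma M S X I)"
  proof (rule measurableI)
    fix B :: "'c set" assume "B \<in> sets borel"
    then show "X i -` B \<inter> space (gen_sigma M S X I) \<in> sets (gen_sigma M S X I)"
      unfolding sp st using i by (intro sigma_sets.Basic) blast
  qed auto
qed

lemma measurable_mono_sets:
  assumes "f \<in> borel_measurable A" "space A = space B" "sets A \<subseteq> sets B"
  shows "f \<in> borel_measurable B"
  by (rule measurable_from_subalg[of B A]) (use assms in \<open>auto simp: subalgebra_def\<close>)

lemma fl_local_closed:
  "fl_local beta h x q = x - beta *\<^sub>R (\<Sum>p<q. h p)"
  by (induction q) (simp_all add: algebra_simps)

lemma lip_cont:
  fixes h :: "'a::real_normed_vector \<Rightarrow> 'c::real_normed_vector"
  assumes "\<And>x y. norm (h x - h y) \<le> L * norm (x - y)"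
  shows "continuous_on UNIV h"
proof -
  have "L \<ge> 0 \<or> (\<forall>x y. h x = h y)"
  proof (cases "L \<ge> 0")
    case False
    have "h x = h y" for x y
    proof -
      have "L * norm (x - y) \<le> 0" using False by (simp add: mult_nonpos_nonneg)
      then have "norm (h x - h y) \<le> 0" using assms[of x y] by linarith
      then show ?thesis by simp
    qed
    then show ?thesis by blast
  qed simp
  then show ?thesis
  proof
    assume L: "L \<ge> 0"
    have "L-lipschitz_on UNIV h" using assms L by (auto intro!: lipschitz_onI simp: dist_norm)
    then show ?thesis by (rule lipschitz_on_continuous_on)
  next
    assume "\<forall>x y. h x = h y"
    then have "h = (\<lambda>_. h 0)" by auto
    then show ?thesis by (metis continuous_on_const)
  qed
qed


locale fedavg =
  fixes M :: "'b measure"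
    and Fil :: "nat \<Rightarrow> 'b measure"
    and f :: "nat \<Rightarrow> 'a::euclidean_space \<Rightarrow> real"
    and gradf :: "nat \<Rightarrow> 'a \<Rightarrow> 'a"
    and g :: "nat \<Rightarrow> nat \<Rightarrow> nat \<Rightarrow> 'b \<Rightarrow> 'a"
    and eps :: "nat \<Rightarrow> 'b \<Rightarrow> 'a"
    and w0 :: 'a
    and W :: "nat \<Rightarrow> 'b \<Rightarrow> 'a"
    and wl :: "nat \<Rightarrow> nat \<Rightarrow> nat \<Rightarrow> 'b \<Rightarrow> 'a"
    and K Q T :: nat
    and beta L Fstar G sigma_g2 sigma_air2 :: real
  assumes prob: "prob_space M"
    and K: "K \<ge> 1" and Q: "Q \<ge> 1" and beta_pos: "beta > 0"
    and sg_nonneg: "sigma_g2 \<ge> 0" and sair_nonneg: "sigma_air2 \<ge> 0"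
    and W_def: "W = fl_global beta K Q w0 g eps"
    and wl_def: "wl = fl_witer beta K Q w0 g eps"
    \<comment> \<open>filtration F_t: generated by the global model and all randomness up to round t\<close>
    and Fil_sub: "\<And>t. subalgebra M (Fil t)"
    and Fil_mono: "\<And>t. sets (Fil t) \<subseteq> sets (Fil (Suc t))"
    and g_meas: "\<And>k q t. g k q t \<in> borel_measurable (Fil (Suc t))"
    and eps_meas: "\<And>t. eps t \<in> borel_measurable (Fil (Suc t))"
    and f_grad: "\<And>k x. k < K \<Longrightarrow> (f k has_derivative (\<lambda>h. gradf k x \<bullet> h)) (at x)"
    and f_smooth: "\<And>k x y. k < K \<Longrightarrow> norm (gradf k x - gradf k y) \<le> L * norm (x - y)"
    and F_lower: "\<And>w. (1 / real K) * (\<Sum>k<K. f k w) \<ge> Fstar"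
    \<comment> \<open>(A2): unbiasedness given the local iterates (and the history)\<close>
    and A2: "\<And>k q t. k < K \<Longrightarrow> q < Q \<Longrightarrow>
       is_cond_exp M (gen_sigma M (sets (Fil t)) (\<lambda>(j, p). g j p t) ({..<K} \<times> {..<q}))
         (g k q t) (\<lambda>\<omega>. gradf k (wl t k q \<omega>))"
    and A3: "\<And>k q t. k < K \<Longrightarrow> q < Q \<Longrightarrow> AE \<omega> in M. norm (g k q t \<omega>) \<le> G"
    and A4_var: "\<And>k q t. k < K \<Longrightarrow> q < Q \<Longrightarrow>
       AE \<omega> in M. real_cond_exp M (gen_sigma M (sets (Fil t)) (\<lambda>(j, p). g j p t) ({..<K} \<times> {..<q}))
         (\<lambda>\<omega>. (norm (g k q t \<omega> - gradf k (wl t k q \<omega>)))\<^sup>2) \<omega> \<le> sigma_g2"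
    and A4_unc: "\<And>k j q t. k < K \<Longrightarrow> j < K \<Longrightarrow> k \<noteq> j \<Longrightarrow> q < Q \<Longrightarrow>
       AE \<omega> in M. real_cond_exp M (gen_sigma M (sets (Fil t)) (\<lambda>(j, p). g j p t) ({..<K} \<times> {..<q}))
         (\<lambda>\<omega>. (g k q t \<omega> - gradf k (wl t k q \<omega>)) \<bullet> (g j q t \<omega> - gradf j (wl t j q \<omega>))) \<omega> = 0"
    and A5_mean: "\<And>t. is_cond_exp M
       (gen_sigma M (sets (Fil t)) (\<lambda>k \<omega>. wl t k Q \<omega> - W t \<omega>) {..<K}) (eps t) (\<lambda>_. 0)"
    and A5_var_int: "\<And>t. integrable M (\<lambda>\<omega>. (norm (eps t \<omega>))\<^sup>2)"
    and A5_var: "\<And>t. (\<integral>\<omega>. (norm (eps t \<omega>))\<^sup>2 \<partial>M) \<le> sigma_air2"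
    and step: "8 * L * real Q * beta \<le> 1"
    and T: "T \<ge> 1"

begin

interpretation P: prob_space M by (rule prob)

lemma space_Fil[simp]: "space (Fil t) = space M"
  using Fil_sub[of t] by (simp add: subalgebra_def)

lemma Fil_mono_le: "t \<le> s \<Longrightarrow> sets (Fil t) \<subseteq> sets (Fil s)"
  by (induction s rule: dec_induct) (use Fil_mono in auto)

lemma meas_Fil_le: "h \<in> borel_measurable (Fil t) \<Longrightarrow> t \<le> s \<Longrightarrow> h \<in> borel_measurable (Fil s)"
  by (rule measurable_mono_sets[of h "Fil t" "Fil s"]) (auto dest: Fil_mono_le)

lemma meas_Fil_M: "h \<in> borel_measurable (Fil t) \<Longrightarrow> h \<in> borel_measurable M"
  by (rule measurable_from_subalg[OF Fil_sub])

lemma fl_local_meas: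
  fixes h :: "nat \<Rightarrow> 'b \<Rightarrow> 'a"
  assumes "\<And>q. h q \<in> borel_measurable N" "x \<in> borel_measurable N"
  shows "(\<lambda>\<omega>. fl_local beta (\<lambda>q. h q \<omega>) (x \<omega>) n) \<in> borel_measurable N"
proof -
  note [measurable] = assms
  show ?thesis unfolding fl_local_closed by measurable
qed

lemma W_Suc: "W (Suc t) \<omega> = W t \<omega> + (1 / real K) *\<^sub>R (\<Sum>k<K. wl t k Q \<omega> - W t \<omega>) + eps t \<omega>"
  unfolding W_def wl_def fl_witer_def by (simp add: Let_def)

lemma wl_closed: "wl t k q \<omega> = W t \<omega> - beta *\<^sub>R (\<Sum>p<q. g k p t \<omega>)"
  unfolding W_def wl_def fl_witer_def fl_local_closed by simp

lemma W_meas_Fil: "W t \<in> borel_measurable (Fil t)"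
proof (induction t)
  case 0
  then show ?case unfolding W_def by simp
next
  case (Suc t)
  have a: "W t \<in> borel_measurable (Fil (Suc t))" using Suc by (rule meas_Fil_le) simp
  have b: "\<And>k q. g k q t \<in> borel_measurable (Fil (Suc t))" by (rule g_meas)
  have c: "eps t \<in> borel_measurable (Fil (Suc t))" by (rule eps_meas)
  note [measurable] = a b c
  show ?case unfolding W_Suc[abs_def] wl_closed by measurable
qed

lemma W_meas[measurable]: "W t \<in> borel_measurable M"
  by (rule meas_Fil_M[OF W_meas_Fil])

lemma g_meas_M[measurable]: "g k q t \<in> borel_measurable M"
  by (rule meas_Fil_M[OF g_meas])

lemma eps_meas_M[measurable]: "eps t \<in> borel_measurable M"
  by (rule meas_Fil_M[OF eps_meas])

lemma wl_meas[measurable]: "wl t k q \<in> borel_measurable M"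
  unfolding wl_closed[abs_def] by measurable

lemma gradf_meas: "k < K \<Longrightarrow> gradf k \<in> borel_measurable borel"
  by (rule borel_measurable_continuous_onI) (rule lip_cont[OF f_smooth])

definition gF :: "'a \<Rightarrow> 'a" where "gF x = (1 / real K) *\<^sub>R (\<Sum>k<K. gradf k x)"
definition FF :: "'a \<Rightarrow> real" where "FF x = (1 / real K) * (\<Sum>k<K. f k x)"

lemma L_nonneg: "L \<ge> 0"
proof -
  obtain b :: 'a where b: "b \<in> Basis" using nonempty_Basis by blast
  have "norm (gradf 0 b - gradf 0 0) \<le> L * norm (b - 0)" using K by (intro f_smooth) simp
  then show ?thesis using b by (metis diff_zero norm_Basis norm_ge_zero order.trans mult_cancel_left1 mult.commute)
qed

lemma G_nonneg: "G \<ge> 0"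
proof (rule ccontr)
  assume "\<not> G \<ge> 0"
  have "AE \<omega> in M. norm (g 0 0 0 \<omega>) \<le> G" using A3[of 0 0 0] K Q by simp
  then have "AE \<omega> in M. False"
    by eventually_elim (use \<open>\<not> G \<ge> 0\<close> in \<open>smt (verit) norm_ge_zero\<close>)
  then show False by simp
qed

lemma gF_lip: "norm (gF x - gF y) \<le> L * norm (x - y)"
proof -
  have "norm (gF x - gF y) = (1 / real K) * norm (\<Sum>k<K. gradf k x - gradf k y)"
    unfolding gF_def by (simp add: sum_subtractf scaleR_diff_right[symmetric])
  also have "\<dots> \<le> (1 / real K) * (\<Sum>k<K. norm (gradf k x - gradf k y))"
    by (intro mult_left_mono norm_sum) auto
  also have "\<dots> \<le> (1 / real K) * (\<Sum>k<K. L * norm (x - y))"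
    by (intro mult_left_mono sum_mono f_smooth) auto
  also have "\<dots> = L * norm (x - y)" using K by simp
  finally show ?thesis .
qed

lemma gF_meas[measurable]: "gF \<in> borel_measurable borel"
  by (rule borel_measurable_continuous_onI) (rule lip_cont[OF gF_lip])

lemma FF_descent: "FF y \<le> FF x + gF x \<bullet> (y - x) + L / 2 * (norm (y - x))\<^sup>2"
proof -
  have "(\<Sum>k<K. f k y) \<le> (\<Sum>k<K. f k x + gradf k x \<bullet> (y - x) + L / 2 * (norm (y - x))\<^sup>2)"
    by (intro sum_mono descent f_grad f_smooth) auto
  also have "\<dots> = (\<Sum>k<K. f k x) + (\<Sum>k<K. gradf k x) \<bullet> (y - x) + real K * (L / 2 * (norm (y - x))\<^sup>2)"
    by (simp add: sum.distrib inner_sum_left)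
  finally have "(\<Sum>k<K. f k y) \<le> \<dots>" .
  then have "(1 / real K) * (\<Sum>k<K. f k y) \<le> (1 / real K) * ((\<Sum>k<K. f k x) + (\<Sum>k<K. gradf k x) \<bullet> (y - x) + real K * (L / 2 * (norm (y - x))\<^sup>2))"
    by (rule mult_left_mono) simp
  then show ?thesis using K unfolding FF_def gF_def by (simp add: algebra_simps)
qed

lemma gradf_wl_meas[measurable]: "k < K \<Longrightarrow> (\<lambda>\<omega>. gradf k (wl t k q \<omega>)) \<in> borel_measurable M"
  using gradf_meas by measurable

lemma test: "(\<lambda>\<omega>. (\<Sum>k<K. g k q t \<omega> - gradf k (wl t k q \<omega>)) \<bullet> W t \<omega>) \<in> borel_measurable M"
  by measurable

lemma norm_sum_sq: "(norm (\<Sum>i<n. v i))\<^sup>2 \<le> real n * (\<Sum>i<n. (norm (v i))\<^sup>2)"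
proof -
  have "(norm (\<Sum>i<n. v i))\<^sup>2 \<le> (\<Sum>i<n. norm (v i))\<^sup>2"
    by (intro power_mono norm_sum) auto
  also have "\<dots> \<le> (\<Sum>i<n. (norm (v i))\<^sup>2) * card {..<n}" by (rule sum_squared_le_sum_of_squares)
  finally show ?thesis by (simp add: mult.commute)
qed

lemma norm_add_sq: "(norm (x + y))\<^sup>2 \<le> 2 * (norm x)\<^sup>2 + 2 * (norm (y::'a))\<^sup>2"
proof -
  have "(norm (x + y))\<^sup>2 \<le> (norm x + norm y)\<^sup>2" by (intro power_mono norm_triangle_ineq) auto
  also have "\<dots> \<le> 2 * (norm x)\<^sup>2 + 2 * (norm y)\<^sup>2" by (smt (verit) sum_squares_bound power2_sum)
  finally show ?thesis .
qed

definition B0 :: real where "B0 = real DIM('a) * G"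

lemma AE_g: "AE \<omega> in M. \<forall>k\<in>{..<K}. \<forall>q\<in>{..<Q}. norm (g k q t \<omega>) \<le> G"
  using A3 by (intro AE_ball_countable' countable_finite) auto

lemma AE_gr: "AE \<omega> in M. \<forall>k\<in>{..<K}. \<forall>q\<in>{..<Q}. norm (gradf k (wl t k q \<omega>)) \<le> B0"
  unfolding B0_def using ce_bounded[OF prob A2 A3] by (intro AE_ball_countable' countable_finite) auto

lemma B0_nonneg: "B0 \<ge> 0" unfolding B0_def using G_nonneg by simp

context
  fixes t :: nat and \<omega> :: 'b
  assumes gb: "\<forall>k\<in>{..<K}. \<forall>q\<in>{..<Q}. norm (g k q t \<omega>) \<le> G"
    and grb: "\<forall>k\<in>{..<K}. \<forall>q\<in>{..<Q}. norm (gradf k (wl t k q \<omega>)) \<le> B0"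
begin

lemma wl_dist: "k < K \<Longrightarrow> q \<le> Q \<Longrightarrow> norm (wl t k q \<omega> - W t \<omega>) \<le> beta * real Q * G"
proof -
  assume k: "k < K" and q: "q \<le> Q"
  have "norm (wl t k q \<omega> - W t \<omega>) = beta * norm (\<Sum>p<q. g k p t \<omega>)"
    unfolding wl_closed using beta_pos by simp
  also have "\<dots> \<le> beta * (\<Sum>p<q. norm (g k p t \<omega>))"
    using beta_pos by (intro mult_left_mono norm_sum) auto
  also have "\<dots> \<le> beta * (\<Sum>p<q. G)"
    using beta_pos gb k q by (intro mult_left_mono sum_mono) auto
  also have "\<dots> \<le> beta * (real Q * G)"
    using beta_pos q G_nonneg by (intro mult_left_mono) (auto intro: mult_right_mono)
  finally show ?thesis by simp
qed

lemma gF_W_eq: "gF (W t \<omega>) = (1 / real K) *\<^sub>R (\<Sum>k<K. gradf k (wl t k 0 \<omega>))"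
  unfolding gF_def wl_closed by simp

lemma avg_bound:
  assumes "\<And>k. k < K \<Longrightarrow> norm (v k) \<le> c"
  shows "norm ((1 / real K) *\<^sub>R (\<Sum>k<K. v k)) \<le> c"
proof -
  have "norm ((1 / real K) *\<^sub>R (\<Sum>k<K. v k)) \<le> (1 / real K) * (\<Sum>k<K. norm (v k))"
    by (simp add: norm_sum divide_right_mono)
  also have "\<dots> \<le> (1 / real K) * (\<Sum>k<K. c)" by (intro mult_left_mono sum_mono assms) auto
  also have "\<dots> = c" using K by simp
  finally show ?thesis .
qed

lemma gF_bound: "norm (gF (W t \<omega>)) \<le> B0"
  unfolding gF_W_eq using grb Q by (intro avg_bound) auto

lemma a_dist: "q < Q \<Longrightarrow> norm ((1 / real K) *\<^sub>R (\<Sum>k<K. gradf k (wl t k q \<omega>)) - gF (W t \<omega>)) \<le> L * (beta * real Q * G)"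
proof -
  assume q: "q < Q"
  have "(1 / real K) *\<^sub>R (\<Sum>k<K. gradf k (wl t k q \<omega>)) - gF (W t \<omega>) = (1 / real K) *\<^sub>R (\<Sum>k<K. gradf k (wl t k q \<omega>) - gradf k (W t \<omega>))"
    unfolding gF_def by (simp add: sum_subtractf scaleR_diff_right)
  also have "norm \<dots> \<le> L * (beta * real Q * G)"
  proof (rule avg_bound)
    fix k assume k: "k < K"
    have "norm (gradf k (wl t k q \<omega>) - gradf k (W t \<omega>)) \<le> L * norm (wl t k q \<omega> - W t \<omega>)" using k by (rule f_smooth)
    also have "\<dots> \<le> L * (beta * real Q * G)" using wl_dist[OF k] q L_nonneg by (intro mult_left_mono) auto
    finally show "norm (gradf k (wl t k q \<omega>) - gradf k (W t \<omega>)) \<le> L * (beta * real Q * G)" .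
  qed
  finally show ?thesis .
qed

lemma n_bound: "q < Q \<Longrightarrow> norm ((1 / real K) *\<^sub>R (\<Sum>k<K. g k q t \<omega> - gradf k (wl t k q \<omega>))) \<le> G + B0"
proof -
  assume q: "q < Q"
  show ?thesis
  proof (rule avg_bound)
    fix k assume k: "k < K"
    have "norm (g k q t \<omega> - gradf k (wl t k q \<omega>)) \<le> norm (g k q t \<omega>) + norm (gradf k (wl t k q \<omega>))" by (rule norm_triangle_ineq4)
    moreover have "norm (g k q t \<omega>) \<le> G" "norm (gradf k (wl t k q \<omega>)) \<le> B0" using gb grb k q by auto
    ultimately show "norm (g k q t \<omega> - gradf k (wl t k q \<omega>)) \<le> G + B0" by linarith
  qed
qed

lemma D_bound: "norm ((1 / real K) *\<^sub>R (\<Sum>k<K. wl t k Q \<omega> - W t \<omega>)) \<le> beta * real Q * G"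
  using wl_dist by (intro avg_bound) auto

end

definition aa where "aa t q \<omega> = (1 / real K) *\<^sub>R (\<Sum>k<K. gradf k (wl t k q \<omega>))"
definition nn where "nn t q \<omega> = (1 / real K) *\<^sub>R (\<Sum>k<K. g k q t \<omega> - gradf k (wl t k q \<omega>))"
definition DD where "DD t \<omega> = (1 / real K) *\<^sub>R (\<Sum>k<K. wl t k Q \<omega> - W t \<omega>)"
definition gw where "gw t \<omega> = gF (W t \<omega>)"

lemma aa_meas[measurable]: "aa t q \<in> borel_measurable M" unfolding aa_def[abs_def] by measurable
lemma nn_meas[measurable]: "nn t q \<in> borel_measurable M" unfolding nn_def[abs_def] by measurable
lemma DD_meas[measurable]: "DD t \<in> borel_measurable M" unfolding DD_def[abs_def] by measurable
lemma gw_meas[measurable]: "gw t \<in> borel_measurable M" unfolding gw_def[abs_def] by measurable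

lemma Wd: "W (Suc t) \<omega> - W t \<omega> = DD t \<omega> + eps t \<omega>"
  unfolding W_Suc DD_def by simp

lemma Dsum: "DD t \<omega> = - beta *\<^sub>R (\<Sum>q<Q. aa t q \<omega> + nn t q \<omega>)"
proof -
  have "aa t q \<omega> + nn t q \<omega> = (1 / real K) *\<^sub>R (\<Sum>k<K. g k q t \<omega>)" for q
    unfolding aa_def nn_def by (simp add: scaleR_add_right[symmetric] sum.distrib[symmetric])
  then have "- beta *\<^sub>R (\<Sum>q<Q. aa t q \<omega> + nn t q \<omega>) = (1 / real K) *\<^sub>R (\<Sum>k<K. - beta *\<^sub>R (\<Sum>q<Q. g k q t \<omega>))"
    by (simp add: scaleR_sum_right sum.swap[of _ "{..<Q}"] sum_negf)
  also have "\<dots> = DD t \<omega>" unfolding DD_def wl_closed by simp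
  finally show ?thesis by simp
qed

definition C0 :: real where "C0 = L\<^sup>2 * beta ^ 3 * G\<^sup>2 * (real Q) ^ 3 / 2 + 2 * L ^ 3 * beta ^ 4 * G\<^sup>2 * (real Q) ^ 4"

lemma pointwise:
  assumes gb: "\<forall>k\<in>{..<K}. \<forall>q\<in>{..<Q}. norm (g k q t \<omega>) \<le> G"
    and grb: "\<forall>k\<in>{..<K}. \<forall>q\<in>{..<Q}. norm (gradf k (wl t k q \<omega>)) \<le> B0"
  shows "gw t \<omega> \<bullet> (DD t \<omega> + eps t \<omega>) + L / 2 * (norm (DD t \<omega> + eps t \<omega>))\<^sup>2
    \<le> - beta * (\<Sum>q<Q. gw t \<omega> \<bullet> nn t q \<omega>) + (gw t \<omega> + L *\<^sub>R DD t \<omega>) \<bullet> eps t \<omega>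
      + L / 2 * (norm (eps t \<omega>))\<^sup>2 - beta * real Q / 4 * (norm (gw t \<omega>))\<^sup>2 + C0
      + L * beta\<^sup>2 * real Q * (\<Sum>q<Q. (norm (nn t q \<omega>))\<^sup>2)"
proof -
  define x where "x = gw t \<omega>"
  define D where "D = DD t \<omega>"
  define e where "e = eps t \<omega>"
  define X where "X = (L * (beta * real Q * G))\<^sup>2"
  define Sa where "Sa = (\<Sum>q<Q. x \<bullet> aa t q \<omega>)"
  define Sn where "Sn = (\<Sum>q<Q. (norm (nn t q \<omega>))\<^sup>2)"
  define Z1 where "Z1 = - beta * (\<Sum>q<Q. x \<bullet> nn t q \<omega>)"
  have ad: "q < Q \<Longrightarrow> norm (aa t q \<omega> - x) \<le> L * (beta * real Q * G)" for q
    unfolding aa_def x_def gw_def using a_dist[OF gb grb] by auto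
  have X0: "0 \<le> L * (beta * real Q * G)" using L_nonneg beta_pos G_nonneg by simp
  have adq: "q < Q \<Longrightarrow> (norm (aa t q \<omega> - x))\<^sup>2 \<le> X" for q
    unfolding X_def using ad by (intro power_mono) auto
  have i: "(norm (D + e))\<^sup>2 = (norm D)\<^sup>2 + 2 * (D \<bullet> e) + (norm e)\<^sup>2"
    by (simp add: power2_norm_eq_inner inner_add_left inner_add_right inner_commute)
  have ii: "x \<bullet> D = Z1 - beta * Sa"
    unfolding D_def Dsum Z1_def Sa_def by (simp add: inner_sum_right sum.distrib inner_add_right distrib_left)
  have iii: "Sa \<ge> real Q * ((norm x)\<^sup>2 / 2 - X / 2)"
  proof -
    have "x \<bullet> aa t q \<omega> \<ge> (norm x)\<^sup>2 / 2 - X / 2" if q: "q < Q" for q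
    proof -
      have "x \<bullet> aa t q \<omega> = (norm x)\<^sup>2 + x \<bullet> (aa t q \<omega> - x)"
        by (simp add: inner_diff_right power2_norm_eq_inner)
      moreover have "x \<bullet> (aa t q \<omega> - x) \<ge> - norm x * norm (aa t q \<omega> - x)"
        using Cauchy_Schwarz_ineq2[of x "aa t q \<omega> - x"] by linarith
      moreover have "norm x * norm (aa t q \<omega> - x) \<le> (norm x)\<^sup>2 / 2 + (norm (aa t q \<omega> - x))\<^sup>2 / 2"
        using zero_le_power2[of "norm x - norm (aa t q \<omega> - x)"] unfolding power2_diff by linarith
      ultimately show ?thesis using adq[OF q] by linarith
    qed
    then have "Sa \<ge> (\<Sum>q<Q. (norm x)\<^sup>2 / 2 - X / 2)" unfolding Sa_def by (intro sum_mono) auto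
    then show ?thesis by simp
  qed
  have iv: "(norm D)\<^sup>2 \<le> beta\<^sup>2 * real Q * (4 * real Q * (norm x)\<^sup>2 + 4 * real Q * X + 2 * Sn)"
  proof -
    have "(norm D)\<^sup>2 = beta\<^sup>2 * (norm (\<Sum>q<Q. aa t q \<omega> + nn t q \<omega>))\<^sup>2"
      unfolding D_def Dsum using beta_pos by (simp add: power_mult_distrib)
    also have "\<dots> \<le> beta\<^sup>2 * (real Q * (\<Sum>q<Q. (norm (aa t q \<omega> + nn t q \<omega>))\<^sup>2))"
      by (intro mult_left_mono norm_sum_sq) auto
    also have "(\<Sum>q<Q. (norm (aa t q \<omega> + nn t q \<omega>))\<^sup>2) \<le> (\<Sum>q<Q. 4 * (norm x)\<^sup>2 + 4 * X + 2 * (norm (nn t q \<omega>))\<^sup>2)"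
    proof (rule sum_mono)
      fix q assume "q \<in> {..<Q}"
      then have q: "q < Q" by simp
      have "(norm (aa t q \<omega> + nn t q \<omega>))\<^sup>2 \<le> 2 * (norm (aa t q \<omega>))\<^sup>2 + 2 * (norm (nn t q \<omega>))\<^sup>2" by (rule norm_add_sq)
      moreover have "(norm (aa t q \<omega>))\<^sup>2 \<le> 2 * (norm x)\<^sup>2 + 2 * (norm (aa t q \<omega> - x))\<^sup>2"
        using norm_add_sq[of x "aa t q \<omega> - x"] by simp
      ultimately show "(norm (aa t q \<omega> + nn t q \<omega>))\<^sup>2 \<le> 4 * (norm x)\<^sup>2 + 4 * X + 2 * (norm (nn t q \<omega>))\<^sup>2"
        using adq[OF q] by linarith
    qed
    then have "beta\<^sup>2 * (real Q * (\<Sum>q<Q. (norm (aa t q \<omega> + nn t q \<omega>))\<^sup>2)) \<le> beta\<^sup>2 * (real Q * (\<Sum>q<Q. 4 * (norm x)\<^sup>2 + 4 * X + 2 * (norm (nn t q \<omega>))\<^sup>2))"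
      by (intro mult_left_mono) auto
    also have "(\<Sum>q<Q. 4 * (norm x)\<^sup>2 + 4 * X + 2 * (norm (nn t q \<omega>))\<^sup>2) = 4 * real Q * (norm x)\<^sup>2 + 4 * real Q * X + 2 * Sn"
      unfolding Sn_def by (simp add: sum.distrib sum_distrib_left algebra_simps)
    finally show ?thesis by (simp add: mult.assoc)
  qed
  have bSa: "beta * Sa \<ge> beta * (real Q * ((norm x)\<^sup>2 / 2 - X / 2))"
    using iii beta_pos by (intro mult_left_mono) auto
  have LD: "L / 2 * (norm D)\<^sup>2 \<le> L / 2 * (beta\<^sup>2 * real Q * (4 * real Q * (norm x)\<^sup>2 + 4 * real Q * X + 2 * Sn))"
    using iv L_nonneg by (intro mult_left_mono) auto
  have absorb: "2 * L * beta\<^sup>2 * (real Q)\<^sup>2 * (norm x)\<^sup>2 \<le> beta * real Q / 4 * (norm x)\<^sup>2"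
  proof -
    have "(8 * L * real Q * beta) * (beta * real Q * (norm x)\<^sup>2) \<le> 1 * (beta * real Q * (norm x)\<^sup>2)"
      using step beta_pos by (intro mult_right_mono) auto
    then show ?thesis by (simp add: power2_eq_square algebra_simps)
  qed
  have C0e: "C0 = beta * real Q * X / 2 + 2 * L * beta\<^sup>2 * (real Q)\<^sup>2 * X"
    unfolding C0_def X_def by (simp add: power_mult_distrib) (simp add: power_numeral_reduce)
  have "x \<bullet> (D + e) + L / 2 * (norm (D + e))\<^sup>2 = x \<bullet> D + (x + L *\<^sub>R D) \<bullet> e + L / 2 * (norm D)\<^sup>2 + L / 2 * (norm e)\<^sup>2"
    unfolding i by (simp add: inner_add_left inner_add_right distrib_left)
  also have "\<dots> \<le> Z1 + (x + L *\<^sub>R D) \<bullet> e + L / 2 * (norm e)\<^sup>2 - beta * real Q / 4 * (norm x)\<^sup>2 + C0 + L * beta\<^sup>2 * real Q * Sn"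
  proof -
    have e1: "L / 2 * (beta\<^sup>2 * real Q * (4 * real Q * (norm x)\<^sup>2 + 4 * real Q * X + 2 * Sn))
      = 2 * L * beta\<^sup>2 * (real Q)\<^sup>2 * (norm x)\<^sup>2 + 2 * L * beta\<^sup>2 * (real Q)\<^sup>2 * X + L * beta\<^sup>2 * real Q * Sn"
      by (simp add: power2_eq_square distrib_left)
    have e2: "beta * (real Q * ((norm x)\<^sup>2 / 2 - X / 2)) = beta * real Q / 2 * (norm x)\<^sup>2 - beta * real Q * X / 2"
      by (simp add: algebra_simps)
    show ?thesis using ii bSa LD absorb C0e e1 e2 by linarith
  qed
  finally show ?thesis unfolding x_def D_def e_def Z1_def Sn_def .
qed

abbreviation Nq where "Nq t q \<equiv> gen_sigma M (sets (Fil t)) (\<lambda>(j, p). g j p t) ({..<K} \<times> {..<q})"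
abbreviation Ne where "Ne t \<equiv> gen_sigma M (sets (Fil t)) (\<lambda>k \<omega>. wl t k Q \<omega> - W t \<omega>) {..<K}"

lemma Fil_sets_M: "sets (Fil t) \<subseteq> sets M" using Fil_sub[of t] by (simp add: subalgebra_def)

lemma Fil_to_gen: "h \<in> borel_measurable (Fil t) \<Longrightarrow> h \<in> borel_measurable (gen_sigma M (sets (Fil t)) X I)"
  by (rule measurable_mono_sets[of h "Fil t"]) (use gen_sigma_facts[OF Fil_sets_M, where X=X and I=I] in auto)

lemma gw_meas_Fil: "gw t \<in> borel_measurable (Fil t)"
  unfolding gw_def[abs_def] using W_meas_Fil[of t] by measurable

lemma int_bdd:
  fixes h :: "'b \<Rightarrow> 'c::{banach,second_countable_topology}"
  shows "h \<in> borel_measurable M \<Longrightarrow> AE \<omega> in M. norm (h \<omega>) \<le> c \<Longrightarrow> integrable M h"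
  by (rule P.integrable_const_bound)

lemma int_inner_bdd:
  fixes u v :: "'b \<Rightarrow> 'a"
  assumes [measurable]: "u \<in> borel_measurable M" "v \<in> borel_measurable M"
    and "AE \<omega> in M. norm (u \<omega>) \<le> a" "AE \<omega> in M. norm (v \<omega>) \<le> b"
  shows "integrable M (\<lambda>\<omega>. u \<omega> \<bullet> v \<omega>)"
proof (rule int_bdd)
  show "AE \<omega> in M. norm (u \<omega> \<bullet> v \<omega>) \<le> a * b" using assms(3,4)
  proof eventually_elim
    case (elim \<omega>)
    have "norm (u \<omega> \<bullet> v \<omega>) \<le> norm (u \<omega>) * norm (v \<omega>)" using Cauchy_Schwarz_ineq2 by simp
    also have "\<dots> \<le> a * b" using elim by (intro mult_mono) (auto intro: order.trans[OF norm_ge_zero])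
    finally show ?case .
  qed
qed measurable

lemma AE_good: "AE \<omega> in M. (\<forall>k\<in>{..<K}. \<forall>q\<in>{..<Q}. norm (g k q t \<omega>) \<le> G) \<and> (\<forall>k\<in>{..<K}. \<forall>q\<in>{..<Q}. norm (gradf k (wl t k q \<omega>)) \<le> B0)"
  using AE_g[of t] AE_gr[of t] by eventually_elim auto

lemma AE_gw: "AE \<omega> in M. norm (gw t \<omega>) \<le> B0"
  using AE_good[of t] by eventually_elim (auto simp: gw_def intro: gF_bound)

lemma AE_gk: "k < K \<Longrightarrow> q < Q \<Longrightarrow> AE \<omega> in M. norm (g k q t \<omega>) \<le> G"
  using AE_good[of t] by eventually_elim auto

lemma AE_grk: "k < K \<Longrightarrow> q < Q \<Longrightarrow> AE \<omega> in M. norm (gradf k (wl t k q \<omega>)) \<le> B0"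
  using AE_good[of t] by eventually_elim auto

lemma AE_xi: "k < K \<Longrightarrow> q < Q \<Longrightarrow> AE \<omega> in M. norm (g k q t \<omega> - gradf k (wl t k q \<omega>)) \<le> G + B0"
  using AE_good[of t] by eventually_elim (smt (verit) lessThan_iff norm_triangle_ineq4)

lemma AE_nn: "q < Q \<Longrightarrow> AE \<omega> in M. norm (nn t q \<omega>) \<le> G + B0"
  using AE_good[of t]
proof eventually_elim
  case (elim \<omega>)
  assume q: "q < Q"
  then show ?case unfolding nn_def using n_bound[of t \<omega> q] elim by blast
qed

lemma AE_DD: "AE \<omega> in M. norm (DD t \<omega>) \<le> beta * real Q * G"
  using AE_good[of t]
proof eventually_elim
  case (elim \<omega>)
  then show ?case unfolding DD_def using D_bound[of t \<omega>] by blast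
qed

lemma int_gw_g: "k < K \<Longrightarrow> q < Q \<Longrightarrow> integrable M (\<lambda>\<omega>. gw t \<omega> \<bullet> g k q t \<omega>)"
  by (rule int_inner_bdd[OF _ _ AE_gw AE_gk]) auto

lemma int_gw_gr: "k < K \<Longrightarrow> q < Q \<Longrightarrow> integrable M (\<lambda>\<omega>. gw t \<omega> \<bullet> gradf k (wl t k q \<omega>))"
  by (rule int_inner_bdd[OF _ _ AE_gw AE_grk]) auto

lemma int_gw_nn: "q < Q \<Longrightarrow> integrable M (\<lambda>\<omega>. gw t \<omega> \<bullet> nn t q \<omega>)"
  by (rule int_inner_bdd[OF _ _ AE_gw AE_nn]) auto

lemma I_gw_nn: "q < Q \<Longrightarrow> (\<integral>\<omega>. gw t \<omega> \<bullet> nn t q \<omega> \<partial>M) = 0"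
proof -
  assume q: "q < Q"
  have e: "gw t \<omega> \<bullet> nn t q \<omega> = (\<Sum>k<K. (1 / real K) * (gw t \<omega> \<bullet> g k q t \<omega> - gw t \<omega> \<bullet> gradf k (wl t k q \<omega>)))" for \<omega>
    unfolding nn_def by (simp add: inner_sum_right inner_diff_right sum_distrib_left)
  have "(\<integral>\<omega>. gw t \<omega> \<bullet> nn t q \<omega> \<partial>M) = (\<Sum>k<K. (1 / real K) * ((\<integral>\<omega>. gw t \<omega> \<bullet> g k q t \<omega> \<partial>M) - (\<integral>\<omega>. gw t \<omega> \<bullet> gradf k (wl t k q \<omega>) \<partial>M)))"
    unfolding e using int_gw_g[OF _ q] int_gw_gr[OF _ q]
    by (subst Bochner_Integration.integral_sum) auto
  also have "\<dots> = 0"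
  proof (rule sum.neutral, rule ballI)
    fix k assume "k \<in> {..<K}"
    then have k: "k < K" by simp
    have "(\<integral>\<omega>. gw t \<omega> \<bullet> g k q t \<omega> \<partial>M) = (\<integral>\<omega>. gw t \<omega> \<bullet> gradf k (wl t k q \<omega>) \<partial>M)"
      by (rule ce_inner[OF prob A2[OF k q] Fil_to_gen[OF gw_meas_Fil] AE_gw])
    then show "(1 / real K) * ((\<integral>\<omega>. gw t \<omega> \<bullet> g k q t \<omega> \<partial>M) - (\<integral>\<omega>. gw t \<omega> \<bullet> gradf k (wl t k q \<omega>) \<partial>M)) = 0"
      by simp
  qed
  finally show ?thesis .
qed

lemma eps_int: "integrable M (eps t)"
  using A5_mean[of t] unfolding is_cond_exp_def by auto

lemma h2_meas: "(\<lambda>\<omega>. gw t \<omega> + L *\<^sub>R DD t \<omega>) \<in> borel_measurable (Ne t)"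
proof -
  have [measurable]: "gw t \<in> borel_measurable (Ne t)" by (rule Fil_to_gen[OF gw_meas_Fil])
  have [measurable]: "k \<in> {..<K} \<Longrightarrow> (\<lambda>\<omega>. wl t k Q \<omega> - W t \<omega>) \<in> borel_measurable (Ne t)" for k
    using gen_sigma_facts(3)[OF Fil_sets_M, of k "{..<K}" "\<lambda>k \<omega>. wl t k Q \<omega> - W t \<omega>" t] by simp
  show ?thesis unfolding DD_def by measurable
qed

lemma AE_h2: "AE \<omega> in M. norm (gw t \<omega> + L *\<^sub>R DD t \<omega>) \<le> B0 + L * (beta * real Q * G)"
  using AE_gw[of t] AE_DD[of t]
proof eventually_elim
  case (elim \<omega>)
  have "norm (gw t \<omega> + L *\<^sub>R DD t \<omega>) \<le> norm (gw t \<omega>) + L * norm (DD t \<omega>)"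
    using norm_triangle_ineq[of "gw t \<omega>" "L *\<^sub>R DD t \<omega>"] L_nonneg by simp
  also have "\<dots> \<le> B0 + L * (beta * real Q * G)" using elim L_nonneg by (intro add_mono mult_left_mono) auto
  finally show ?case .
qed

lemma int_Z2: "integrable M (\<lambda>\<omega>. (gw t \<omega> + L *\<^sub>R DD t \<omega>) \<bullet> eps t \<omega>)"
proof -
  have iC: "integrable M (\<lambda>\<omega>. (B0 + L * (beta * real Q * G)) * norm (eps t \<omega>))" using eps_int by auto
  show ?thesis
  proof (rule Bochner_Integration.integrable_bound[OF iC])
    show "(\<lambda>\<omega>. (gw t \<omega> + L *\<^sub>R DD t \<omega>) \<bullet> eps t \<omega>) \<in> borel_measurable M" by measurable
    show "AE \<omega> in M. norm ((gw t \<omega> + L *\<^sub>R DD t \<omega>) \<bullet> eps t \<omega>) \<le> norm ((B0 + L * (beta * real Q * G)) * norm (eps t \<omega>))"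
      using AE_h2[of t]
    proof eventually_elim
      case (elim \<omega>)
      have "norm ((gw t \<omega> + L *\<^sub>R DD t \<omega>) \<bullet> eps t \<omega>) \<le> norm (gw t \<omega> + L *\<^sub>R DD t \<omega>) * norm (eps t \<omega>)"
        using Cauchy_Schwarz_ineq2 by simp
      also have "\<dots> \<le> (B0 + L * (beta * real Q * G)) * norm (eps t \<omega>)" using elim by (intro mult_right_mono) auto
      also have "\<dots> \<le> norm ((B0 + L * (beta * real Q * G)) * norm (eps t \<omega>))" by simp
      finally show ?case .
    qed
  qed
qed

lemma I_Z2: "(\<integral>\<omega>. (gw t \<omega> + L *\<^sub>R DD t \<omega>) \<bullet> eps t \<omega> \<partial>M) = 0"
  using ce_inner[OF prob A5_mean[of t] h2_meas AE_h2] by simp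

lemma int_xixi: "k < K \<Longrightarrow> j < K \<Longrightarrow> q < Q \<Longrightarrow>
  integrable M (\<lambda>\<omega>. (g k q t \<omega> - gradf k (wl t k q \<omega>)) \<bullet> (g j q t \<omega> - gradf j (wl t j q \<omega>)))"
  by (rule int_inner_bdd[OF _ _ AE_xi AE_xi]) auto

lemma I_xixi:
  assumes k: "k < K" and j: "j < K" and q: "q < Q"
  shows "(\<integral>\<omega>. (g k q t \<omega> - gradf k (wl t k q \<omega>)) \<bullet> (g j q t \<omega> - gradf j (wl t j q \<omega>)) \<partial>M)
    \<le> (if k = j then sigma_g2 else 0)"
proof -
  have sub: "subalgebra M (Nq t q)" using A2[OF k q] unfolding is_cond_exp_def by auto
  interpret S: finite_measure_subalgebra M "Nq t q" by unfold_locales (rule sub)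
  let ?h = "\<lambda>\<omega>. (g k q t \<omega> - gradf k (wl t k q \<omega>)) \<bullet> (g j q t \<omega> - gradf j (wl t j q \<omega>))"
  have ih: "integrable M ?h" by (rule int_xixi[OF k j q])
  have eq: "(\<integral>\<omega>. ?h \<omega> \<partial>M) = (\<integral>\<omega>. real_cond_exp M (Nq t q) ?h \<omega> \<partial>M)"
    using S.real_cond_exp_int(2)[OF ih] by simp
  show ?thesis
  proof (cases "k = j")
    case True
    have hh: "?h = (\<lambda>\<omega>. (norm (g k q t \<omega> - gradf k (wl t k q \<omega>)))\<^sup>2)"
      using True by (simp add: power2_norm_eq_inner)
    have "(\<integral>\<omega>. real_cond_exp M (Nq t q) ?h \<omega> \<partial>M) \<le> (\<integral>\<omega>. sigma_g2 \<partial>M)"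
    proof (rule integral_mono_AE)
      show "integrable M (real_cond_exp M (Nq t q) ?h)" by (rule S.real_cond_exp_int(1)[OF ih])
      show "integrable M (\<lambda>\<omega>. sigma_g2)" by simp
      show "AE \<omega> in M. real_cond_exp M (Nq t q) ?h \<omega> \<le> sigma_g2"
        unfolding hh by (rule A4_var[OF k q])
    qed
    then show ?thesis using eq True by (simp add: P.prob_space)
  next
    case False
    have "(\<integral>\<omega>. real_cond_exp M (Nq t q) ?h \<omega> \<partial>M) = (\<integral>\<omega>. 0 \<partial>M)"
      by (rule integral_cong_AE) (use A4_unc[OF k j False q] in auto)
    then show ?thesis using eq False by simp
  qed
qed

lemma I_nn: "q < Q \<Longrightarrow> integrable M (\<lambda>\<omega>. (norm (nn t q \<omega>))\<^sup>2) \<and> (\<integral>\<omega>. (norm (nn t q \<omega>))\<^sup>2 \<partial>M) \<le> sigma_g2 / real K"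
proof -
  assume q: "q < Q"
  let ?x = "\<lambda>k \<omega>. g k q t \<omega> - gradf k (wl t k q \<omega>)"
  have e: "(norm (nn t q \<omega>))\<^sup>2 = (\<Sum>k<K. \<Sum>j<K. (1 / real K)\<^sup>2 * (?x j \<omega> \<bullet> ?x k \<omega>))" for \<omega>
    unfolding nn_def power2_norm_eq_inner
    by (simp add: inner_sum_left inner_sum_right sum_distrib_left power2_eq_square mult.assoc)
  have ints: "integrable M (\<lambda>\<omega>. (\<Sum>k<K. \<Sum>j<K. (1 / real K)\<^sup>2 * (?x j \<omega> \<bullet> ?x k \<omega>)))"
    using int_xixi[OF _ _ q] by (intro Bochner_Integration.integrable_sum integrable_mult_right) auto
  have "(\<integral>\<omega>. (\<Sum>k<K. \<Sum>j<K. (1 / real K)\<^sup>2 * (?x j \<omega> \<bullet> ?x k \<omega>)) \<partial>M)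
      = (\<Sum>k<K. \<Sum>j<K. (1 / real K)\<^sup>2 * (\<integral>\<omega>. ?x j \<omega> \<bullet> ?x k \<omega> \<partial>M))"
  proof -
    have i1: "k < K \<Longrightarrow> j < K \<Longrightarrow> integrable M (\<lambda>\<omega>. (1 / real K)\<^sup>2 * (?x j \<omega> \<bullet> ?x k \<omega>))" for k j
      using int_xixi[OF _ _ q] by auto
    have i2: "k < K \<Longrightarrow> integrable M (\<lambda>\<omega>. \<Sum>j<K. (1 / real K)\<^sup>2 * (?x j \<omega> \<bullet> ?x k \<omega>))" for k
      using i1 by (intro Bochner_Integration.integrable_sum) auto
    show ?thesis
      apply (subst Bochner_Integration.integral_sum)
       apply (use i2 in simp)
      apply (rule sum.cong[OF refl])
      apply (subst Bochner_Integration.integral_sum)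
       apply (use i1 in simp)
      apply simp
      done
  qed
  also have "\<dots> \<le> (\<Sum>k<K. \<Sum>j<K. (1 / real K)\<^sup>2 * (if j = k then sigma_g2 else 0))"
    using I_xixi[OF _ _ q] by (intro sum_mono mult_left_mono) auto
  also have "\<dots> = (\<Sum>k<K. (1 / real K)\<^sup>2 * sigma_g2)"
  proof (rule sum.cong[OF refl])
    fix k assume "k \<in> {..<K}"
    then show "(\<Sum>j<K. (1 / real K)\<^sup>2 * (if j = k then sigma_g2 else 0)) = (1 / real K)\<^sup>2 * sigma_g2"
      by (simp add: sum_distrib_left[symmetric] sum.delta')
  qed
  also have "\<dots> = sigma_g2 / real K"
    using K by (simp add: power2_eq_square)
  finally show ?thesis unfolding e using ints by simp
qed

lemma int_sq_bdd:
  fixes u :: "'b \<Rightarrow> 'a"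
  assumes [measurable]: "u \<in> borel_measurable M" and "AE \<omega> in M. norm (u \<omega>) \<le> a"
  shows "integrable M (\<lambda>\<omega>. (norm (u \<omega>))\<^sup>2)"
proof (rule int_bdd)
  show "AE \<omega> in M. norm ((norm (u \<omega>))\<^sup>2) \<le> a\<^sup>2" using assms(2)
    by eventually_elim (simp add: power_mono)
qed measurable

lemma step_t:
  shows "integrable M (\<lambda>\<omega>. gw t \<omega> \<bullet> (W (Suc t) \<omega> - W t \<omega>) + L / 2 * (norm (W (Suc t) \<omega> - W t \<omega>))\<^sup>2)"
    and "(\<integral>\<omega>. gw t \<omega> \<bullet> (W (Suc t) \<omega> - W t \<omega>) + L / 2 * (norm (W (Suc t) \<omega> - W t \<omega>))\<^sup>2 \<partial>M)
      \<le> - beta * real Q / 4 * (\<integral>\<omega>. (norm (gw t \<omega>))\<^sup>2 \<partial>M) + C0 + L * beta\<^sup>2 * (real Q)\<^sup>2 * sigma_g2 / real K + L / 2 * sigma_air2"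
proof -
  have eqL: "gw t \<omega> \<bullet> (W (Suc t) \<omega> - W t \<omega>) + L / 2 * (norm (W (Suc t) \<omega> - W t \<omega>))\<^sup>2
    = gw t \<omega> \<bullet> DD t \<omega> + (gw t \<omega> + L *\<^sub>R DD t \<omega>) \<bullet> eps t \<omega> + L / 2 * (norm (DD t \<omega>))\<^sup>2 + L / 2 * (norm (eps t \<omega>))\<^sup>2" for \<omega>
    unfolding Wd by (simp add: power2_norm_eq_inner inner_add_left inner_add_right inner_commute distrib_left)
  have i1: "integrable M (\<lambda>\<omega>. gw t \<omega> \<bullet> DD t \<omega>)" by (rule int_inner_bdd[OF _ _ AE_gw AE_DD]) auto
  have i2: "integrable M (\<lambda>\<omega>. (gw t \<omega> + L *\<^sub>R DD t \<omega>) \<bullet> eps t \<omega>)" by (rule int_Z2)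
  have i3: "integrable M (\<lambda>\<omega>. (norm (DD t \<omega>))\<^sup>2)" by (rule int_sq_bdd[OF _ AE_DD]) auto
  have i4: "integrable M (\<lambda>\<omega>. (norm (eps t \<omega>))\<^sup>2)" by (rule A5_var_int)
  have i5: "integrable M (\<lambda>\<omega>. (norm (gw t \<omega>))\<^sup>2)" by (rule int_sq_bdd[OF _ AE_gw]) auto
  have i6: "integrable M (\<lambda>\<omega>. \<Sum>q<Q. gw t \<omega> \<bullet> nn t q \<omega>)"
    using int_gw_nn by (intro Bochner_Integration.integrable_sum) auto
  have i7: "integrable M (\<lambda>\<omega>. \<Sum>q<Q. (norm (nn t q \<omega>))\<^sup>2)"
    using I_nn by (intro Bochner_Integration.integrable_sum) auto
  show iL: "integrable M (\<lambda>\<omega>. gw t \<omega> \<bullet> (W (Suc t) \<omega> - W t \<omega>) + L / 2 * (norm (W (Suc t) \<omega> - W t \<omega>))\<^sup>2)"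
    unfolding eqL using i1 i2 i3 i4 by auto
  define R where "R \<omega> = - beta * (\<Sum>q<Q. gw t \<omega> \<bullet> nn t q \<omega>) + (gw t \<omega> + L *\<^sub>R DD t \<omega>) \<bullet> eps t \<omega>
      + L / 2 * (norm (eps t \<omega>))\<^sup>2 - beta * real Q / 4 * (norm (gw t \<omega>))\<^sup>2 + C0
      + L * beta\<^sup>2 * real Q * (\<Sum>q<Q. (norm (nn t q \<omega>))\<^sup>2)" for \<omega>
  have iR: "integrable M R" unfolding R_def using i2 i4 i5 i6 i7 by auto
  have "(\<integral>\<omega>. gw t \<omega> \<bullet> (W (Suc t) \<omega> - W t \<omega>) + L / 2 * (norm (W (Suc t) \<omega> - W t \<omega>))\<^sup>2 \<partial>M) \<le> (\<integral>\<omega>. R \<omega> \<partial>M)"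
  proof (rule integral_mono_AE[OF iL iR])
    show "AE \<omega> in M. gw t \<omega> \<bullet> (W (Suc t) \<omega> - W t \<omega>) + L / 2 * (norm (W (Suc t) \<omega> - W t \<omega>))\<^sup>2 \<le> R \<omega>"
      using AE_good[of t] unfolding Wd R_def by eventually_elim (rule pointwise, auto)
  qed
  also have "(\<integral>\<omega>. R \<omega> \<partial>M) = - beta * (\<Sum>q<Q. \<integral>\<omega>. gw t \<omega> \<bullet> nn t q \<omega> \<partial>M) + (\<integral>\<omega>. (gw t \<omega> + L *\<^sub>R DD t \<omega>) \<bullet> eps t \<omega> \<partial>M)
      + L / 2 * (\<integral>\<omega>. (norm (eps t \<omega>))\<^sup>2 \<partial>M) - beta * real Q / 4 * (\<integral>\<omega>. (norm (gw t \<omega>))\<^sup>2 \<partial>M) + C0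
      + L * beta\<^sup>2 * real Q * (\<Sum>q<Q. \<integral>\<omega>. (norm (nn t q \<omega>))\<^sup>2 \<partial>M)"
  proof -
    have s1: "(\<integral>\<omega>. (\<Sum>q<Q. gw t \<omega> \<bullet> nn t q \<omega>) \<partial>M) = (\<Sum>q<Q. \<integral>\<omega>. gw t \<omega> \<bullet> nn t q \<omega> \<partial>M)"
      using int_gw_nn by (subst Bochner_Integration.integral_sum) auto
    have s2: "(\<integral>\<omega>. (\<Sum>q<Q. (norm (nn t q \<omega>))\<^sup>2) \<partial>M) = (\<Sum>q<Q. \<integral>\<omega>. (norm (nn t q \<omega>))\<^sup>2 \<partial>M)"
      using I_nn by (subst Bochner_Integration.integral_sum) auto
    show ?thesis unfolding R_def using i2 i4 i5 i6 i7 s1 s2 by (simp add: P.prob_space)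
  qed
  also have "\<dots> \<le> - beta * real Q / 4 * (\<integral>\<omega>. (norm (gw t \<omega>))\<^sup>2 \<partial>M) + C0 + L * beta\<^sup>2 * (real Q)\<^sup>2 * sigma_g2 / real K + L / 2 * sigma_air2"
  proof -
    have z1: "- beta * (\<Sum>q<Q. \<integral>\<omega>. gw t \<omega> \<bullet> nn t q \<omega> \<partial>M) = 0" using I_gw_nn by simp
    have z2: "(\<Sum>q<Q. \<integral>\<omega>. (norm (nn t q \<omega>))\<^sup>2 \<partial>M) \<le> (\<Sum>q<Q. sigma_g2 / real K)"
      using I_nn by (intro sum_mono) auto
    have z2': "L * beta\<^sup>2 * real Q * (\<Sum>q<Q. \<integral>\<omega>. (norm (nn t q \<omega>))\<^sup>2 \<partial>M) \<le> L * beta\<^sup>2 * real Q * (\<Sum>q<Q. sigma_g2 / real K)"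
      using z2 L_nonneg by (intro mult_left_mono) auto
    have z2'': "L * beta\<^sup>2 * real Q * (\<Sum>q<Q. sigma_g2 / real K) = L * beta\<^sup>2 * (real Q)\<^sup>2 * sigma_g2 / real K"
      by (simp add: power2_eq_square)
    have z3: "L / 2 * (\<integral>\<omega>. (norm (eps t \<omega>))\<^sup>2 \<partial>M) \<le> L / 2 * sigma_air2"
      using A5_var L_nonneg by (intro mult_left_mono) auto
    show ?thesis using z1 z2' z2'' z3 I_Z2[of t] by linarith
  qed
  finally show "(\<integral>\<omega>. gw t \<omega> \<bullet> (W (Suc t) \<omega> - W t \<omega>) + L / 2 * (norm (W (Suc t) \<omega> - W t \<omega>))\<^sup>2 \<partial>M)
      \<le> - beta * real Q / 4 * (\<integral>\<omega>. (norm (gw t \<omega>))\<^sup>2 \<partial>M) + C0 + L * beta\<^sup>2 * (real Q)\<^sup>2 * sigma_g2 / real K + L / 2 * sigma_air2" .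
qed

lemma telescope: "FF (W T \<omega>) - FF w0 \<le> (\<Sum>t<T. gw t \<omega> \<bullet> (W (Suc t) \<omega> - W t \<omega>) + L / 2 * (norm (W (Suc t) \<omega> - W t \<omega>))\<^sup>2)"
proof (induction T)
  case 0
  then show ?case by (simp add: W_def)
next
  case (Suc T)
  have "FF (W (Suc T) \<omega>) \<le> FF (W T \<omega>) + gw T \<omega> \<bullet> (W (Suc T) \<omega> - W T \<omega>) + L / 2 * (norm (W (Suc T) \<omega> - W T \<omega>))\<^sup>2"
    unfolding gw_def by (rule FF_descent)
  then show ?case using Suc by simp
qed

lemma main:
  shows "(1 / real T) * (\<Sum>t<T. \<integral>\<omega>. (norm ((1 / real K) *\<^sub>R (\<Sum>k<K. gradf k (W t \<omega>))))\<^sup>2 \<partial>M)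
    \<le> 4 * ((1 / real K) * (\<Sum>k<K. f k w0) - Fstar) / (beta * real Q * real T)
      + 2 * L\<^sup>2 * beta\<^sup>2 * (real Q)\<^sup>2 * G\<^sup>2
      + 8 * L ^ 3 * beta ^ 3 * (real Q) ^ 3 * G\<^sup>2
      + 4 * L * beta * real Q / real K * sigma_g2
      + 2 * L / (beta * real Q) * sigma_air2"
proof -
  define st where "st t \<omega> = gw t \<omega> \<bullet> (W (Suc t) \<omega> - W t \<omega>) + L / 2 * (norm (W (Suc t) \<omega> - W t \<omega>))\<^sup>2" for t \<omega>
  define I where "I t = (\<integral>\<omega>. (norm (gw t \<omega>))\<^sup>2 \<partial>M)" for t
  define C where "C = C0 + L * beta\<^sup>2 * (real Q)\<^sup>2 * sigma_g2 / real K + L / 2 * sigma_air2"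
  define A where "A = FF w0 - Fstar"
  have ist: "integrable M (st t)" for t unfolding st_def[abs_def] by (rule step_t(1))
  have bst: "(\<integral>\<omega>. st t \<omega> \<partial>M) \<le> - beta * real Q / 4 * I t + C" for t
    unfolding st_def I_def C_def using step_t(2)[of t] by simp
  have pw: "Fstar - FF w0 \<le> (\<Sum>t<T. st t \<omega>)" for \<omega>
    using telescope[of \<omega>] F_lower[of "W T \<omega>"] unfolding st_def FF_def by simp
  have "Fstar - FF w0 = (\<integral>\<omega>. Fstar - FF w0 \<partial>M)" by (simp add: P.prob_space)
  also have "\<dots> \<le> (\<integral>\<omega>. (\<Sum>t<T. st t \<omega>) \<partial>M)"
    using ist by (intro integral_mono) (auto intro: pw)
  also have "\<dots> = (\<Sum>t<T. \<integral>\<omega>. st t \<omega> \<partial>M)"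
    using ist by (subst Bochner_Integration.integral_sum) auto
  also have "\<dots> \<le> (\<Sum>t<T. - beta * real Q / 4 * I t + C)" by (intro sum_mono bst)
  also have "\<dots> = - beta * real Q / 4 * (\<Sum>t<T. I t) + real T * C"
    by (simp add: sum.distrib sum_distrib_left[symmetric] sum_subtractf sum_divide_distrib[symmetric])
  finally have key: "beta * real Q / 4 * (\<Sum>t<T. I t) \<le> A + real T * C" unfolding A_def by linarith
  have pos: "beta * real Q * real T > 0" using beta_pos Q T by simp
  have "(1 / real T) * (\<Sum>t<T. I t) \<le> 4 * A / (beta * real Q * real T) + 4 * C / (beta * real Q)"
  proof -
    have "(\<Sum>t<T. I t) \<le> 4 * (A + real T * C) / (beta * real Q)"
      using key beta_pos Q by (simp add: field_simps)
    then have "(1 / real T) * (\<Sum>t<T. I t) \<le> (1 / real T) * (4 * (A + real T * C) / (beta * real Q))"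
      using T by (intro mult_left_mono) auto
    also have "\<dots> = 4 * A / (beta * real Q * real T) + 4 * C / (beta * real Q)"
      using T beta_pos Q by (simp add: field_simps)
    finally show ?thesis .
  qed
  also have "4 * C / (beta * real Q) = 2 * L\<^sup>2 * beta\<^sup>2 * (real Q)\<^sup>2 * G\<^sup>2
      + 8 * L ^ 3 * beta ^ 3 * (real Q) ^ 3 * G\<^sup>2
      + 4 * L * beta * real Q / real K * sigma_g2
      + 2 * L / (beta * real Q) * sigma_air2"
    unfolding C_def C0_def using beta_pos Q by (simp add: field_simps power2_eq_square power3_eq_cube power4_eq_xxxx)
  finally show ?thesis unfolding I_def gw_def gF_def A_def FF_def by (simp add: add.assoc)
qed

end

theorem theorem1:
  fixes M :: "'b measure"
    and Fil :: "nat \<Rightarrow> 'b measure"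
    and f :: "nat \<Rightarrow> 'a::euclidean_space \<Rightarrow> real"
    and gradf :: "nat \<Rightarrow> 'a \<Rightarrow> 'a"
    and g :: "nat \<Rightarrow> nat \<Rightarrow> nat \<Rightarrow> 'b \<Rightarrow> 'a"
    and eps :: "nat \<Rightarrow> 'b \<Rightarrow> 'a"
    and w0 :: 'a
    and W :: "nat \<Rightarrow> 'b \<Rightarrow> 'a"
    and wl :: "nat \<Rightarrow> nat \<Rightarrow> nat \<Rightarrow> 'b \<Rightarrow> 'a"
    and K Q T :: nat
    and beta L Fstar G sigma_g2 sigma_air2 :: real
  assumes prob: "prob_space M"
    and K: "K \<ge> 1" and Q: "Q \<ge> 1" and beta_pos: "beta > 0"
    and sg_nonneg: "sigma_g2 \<ge> 0" and sair_nonneg: "sigma_air2 \<ge> 0"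
    \<comment> \<open>iterates\<close>
    and W_def: "W = fl_global beta K Q w0 g eps"
    and wl_def: "wl = fl_witer beta K Q w0 g eps"
    \<comment> \<open>filtration F_t: generated by the global model and all randomness up to round t\<close>
    and Fil_sub: "\<And>t. subalgebra M (Fil t)"
    and Fil_mono: "\<And>t. sets (Fil t) \<subseteq> sets (Fil (Suc t))"
    and g_meas: "\<And>k q t. g k q t \<in> borel_measurable (Fil (Suc t))"
    and eps_meas: "\<And>t. eps t \<in> borel_measurable (Fil (Suc t))"
    \<comment> \<open>(A1)\<close>
    and f_grad: "\<And>k x. k < K \<Longrightarrow> (f k has_derivative (\<lambda>h. gradf k x \<bullet> h)) (at x)"
    and f_smooth: "\<And>k x y. k < K \<Longrightarrow> norm (gradf k x - gradf k y) \<le> L * norm (x - y)"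
    and F_lower: "\<And>w. (1 / real K) * (\<Sum>k<K. f k w) \<ge> Fstar"
    \<comment> \<open>(A2): unbiasedness given the local iterates (and the history)\<close>
    and A2: "\<And>k q t. k < K \<Longrightarrow> q < Q \<Longrightarrow>
       is_cond_exp M (gen_sigma M (sets (Fil t)) (\<lambda>(j, p). g j p t) ({..<K} \<times> {..<q}))
         (g k q t) (\<lambda>\<omega>. gradf k (wl t k q \<omega>))"
    \<comment> \<open>(A3)\<close>
    and A3: "\<And>k q t. k < K \<Longrightarrow> q < Q \<Longrightarrow> AE \<omega> in M. norm (g k q t \<omega>) \<le> G"
    \<comment> \<open>(A4): conditional variance bound and conditional uncorrelatedness across clients\<close>
    and A4_var: "\<And>k q t. k < K \<Longrightarrow> q < Q \<Longrightarrow>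
       AE \<omega> in M. real_cond_exp M (gen_sigma M (sets (Fil t)) (\<lambda>(j, p). g j p t) ({..<K} \<times> {..<q}))
         (\<lambda>\<omega>. (norm (g k q t \<omega> - gradf k (wl t k q \<omega>)))\<^sup>2) \<omega> \<le> sigma_g2"
    and A4_unc: "\<And>k j q t. k < K \<Longrightarrow> j < K \<Longrightarrow> k \<noteq> j \<Longrightarrow> q < Q \<Longrightarrow>
       AE \<omega> in M. real_cond_exp M (gen_sigma M (sets (Fil t)) (\<lambda>(j, p). g j p t) ({..<K} \<times> {..<q}))
         (\<lambda>\<omega>. (g k q t \<omega> - gradf k (wl t k q \<omega>)) \<bullet> (g j q t \<omega> - gradf j (wl t j q \<omega>))) \<omega> = 0"
    \<comment> \<open>(A5): aggregation error\<close>
    and A5_mean: "\<And>t. is_cond_exp M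
       (gen_sigma M (sets (Fil t)) (\<lambda>k \<omega>. wl t k Q \<omega> - W t \<omega>) {..<K}) (eps t) (\<lambda>_. 0)"
    and A5_var_int: "\<And>t. integrable M (\<lambda>\<omega>. (norm (eps t \<omega>))\<^sup>2)"
    and A5_var: "\<And>t. (\<integral>\<omega>. (norm (eps t \<omega>))\<^sup>2 \<partial>M) \<le> sigma_air2"
    \<comment> \<open>stepsize condition beta \<le> 1/(8LQ)\<close>
    and step: "8 * L * real Q * beta \<le> 1"
    and T: "T \<ge> 1"
  shows "(1 / real T) * (\<Sum>t<T. \<integral>\<omega>. (norm ((1 / real K) *\<^sub>R (\<Sum>k<K. gradf k (W t \<omega>))))\<^sup>2 \<partial>M)
    \<le> 4 * ((1 / real K) * (\<Sum>k<K. f k w0) - Fstar) / (beta * real Q * real T)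
      + 2 * L\<^sup>2 * beta\<^sup>2 * (real Q)\<^sup>2 * G\<^sup>2
      + 8 * L ^ 3 * beta ^ 3 * (real Q) ^ 3 * G\<^sup>2
      + 4 * L * beta * real Q / real K * sigma_g2
      + 2 * L / (beta * real Q) * sigma_air2"
proof -
  interpret fedavg M Fil f gradf g eps w0 W wl K Q T beta L Fstar G sigma_g2 sigma_air2
    by (rule fedavg.intro) (fact assms)+
  show ?thesis by (rule main)
qed

end
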